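(* Consider $m$ test points $X_{2n+1},\dots,X_{2n+m}$, each either an inlier (drawn from $P_X$) or an outlier, such that the inliers are jointly independent of each other and of $\mathcal{D}$; no continuity of the distribution of $\hat s(X)$ is assumed. Let $U_1,\dots,U_m$ be i.i.d. $\mathrm{Unif}([0,1])$, independent of all data, and define the randomized marginal conformal p-values \[p_j = \frac{|\{i \in \{n+1,\dots,2n\} : \hat{s}(X_i) < \hat{s}(X_{2n+j})\}| + \lceil (1 + |\{i \in \{n+1,\dots,2n\} : \hat{s}(X_i) = \hat{s}(X_{2n+j})\}|)U_j\rceil}{n+1},\quad j=1,\dots,m.\] Then $(p_1,\dots,p_m)$ is PRDS on the set of indices of inliers.
   Context: Setting: $P_X$ is a distribution on $\mathbb{R}^d$. Data $X_1,\dots,X_{2n}$ are i.i.d. from $P_X$; $\mathcal{D}^{\mathrm{train}}=\{X_1,\dots,X_n\}$ is treated as fixed (all probabilities conditional on it), $\mathcal{D}^{\mathrm{cal}}=\{X_{n+1},\dots,X_{2n}\}$, $\mathcal{D}=\mathcal{D}^{\mathrm{train}}\cup\mathcal{D}^{\mathrm{cal}}$. The score $\hat s:\mathbb{R}^d\to\mathbb{R}$ is a fixed function determined by $\mathcal{D}^{\mathrm{train}}$. For vectors $a,b\in\mathbb{R}^m$, $a\succeq b$ means coordinatewise $a_j\ge b_j$; $A\subset\mathbb{R}^m$ is increasing if $a\in A$, $b\succeq a$ imply $b\in A$. A random vector $Y=(Y_1,\dots,Y_m)$ is PRDS on $I_0\subset\{1,\dots,m\}$ if for every $i\in I_0$ and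 every increasing set $A$, $y\mapsto\mathbb{P}[Y\in A\mid Y_i=y]$ is non-decreasing. *)

theory Defs
  imports "HOL-Probability.Probability"
begin

text \<open>Sources of randomness: calibration point i (i < n), inlier test point j,
  auxiliary uniform U_j, and the block of all outlier test points.\<close>
datatype 'm src = Cal nat | Inl 'm | Unif 'm | Outl

definition src_sigma ::
  "'w measure \<Rightarrow> (nat \<Rightarrow> 'w \<Rightarrow> 'd::topological_space) \<Rightarrow> ('m \<Rightarrow> 'w \<Rightarrow> 'd)
    \<Rightarrow> ('m \<Rightarrow> 'w \<Rightarrow> real) \<Rightarrow> 'm set \<Rightarrow> 'm src \<Rightarrow> 'w set set" where
  "src_sigma M Xcal Xtest U inl k =
     (case k of
        Cal i \<Rightarrow> sets (vimage_algebra (space M) (Xcal i) borel)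
      | Inl j \<Rightarrow> sets (vimage_algebra (space M) (Xtest j) borel)
      | Unif j \<Rightarrow> sets (vimage_algebra (space M) (U j) borel)
      | Outl \<Rightarrow> sigma_sets (space M)
                  (\<Union>j\<in>-inl. {Xtest j -` B \<inter> space M | B. B \<in> sets borel}))"

text \<open>Randomized marginal conformal p-value; calibration points are indexed 0..n-1
  (standing for X_{n+1},...,X_{2n}).\<close>
definition conf_pval ::
  "('d \<Rightarrow> real) \<Rightarrow> nat \<Rightarrow> (nat \<Rightarrow> 'd) \<Rightarrow> 'd \<Rightarrow> real \<Rightarrow> real" where
  "conf_pval s n cal x u =
     (real (card {i\<in>{..<n}. s (cal i) < s x})
      + real_of_int \<lceil>(1 + real (card {i\<in>{..<n}. s (cal i) = s x})) * u\<rceil>) / (real n + 1)"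

definition increasing_set :: "('m \<Rightarrow> real) set \<Rightarrow> bool" where
  "increasing_set A \<longleftrightarrow> (\<forall>a\<in>A. \<forall>b. (\<forall>j. a j \<le> b j) \<longrightarrow> b \<in> A)"

definition cond_prob_eq ::
  "'w measure \<Rightarrow> ('m \<Rightarrow> 'w \<Rightarrow> real) \<Rightarrow> ('m \<Rightarrow> real) set \<Rightarrow> 'm \<Rightarrow> real \<Rightarrow> real" where
  "cond_prob_eq M Y A i y =
     measure M {\<omega>\<in>space M. (\<lambda>j. Y j \<omega>) \<in> A \<and> Y i \<omega> = y} / measure M {\<omega>\<in>space M. Y i \<omega> = y}"

definition PRDS_on :: "'w measure \<Rightarrow> ('m \<Rightarrow> 'w \<Rightarrow> real) \<Rightarrow> 'm set \<Rightarrow> bool" where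
  "PRDS_on M Y I0 \<longleftrightarrow>
     (\<forall>i\<in>I0. \<forall>A. increasing_set A \<longrightarrow>
        (\<forall>y y'. y \<le> y' \<and> measure M {\<omega>\<in>space M. Y i \<omega> = y} > 0
                \<and> measure M {\<omega>\<in>space M. Y i \<omega> = y'} > 0
           \<longrightarrow> cond_prob_eq M Y A i y \<le> cond_prob_eq M Y A i y'))"

end

theory Submission
  imports Defs
begin

definition clampu :: "real \<Rightarrow> real" where "clampu t = max 0 (min 1 t)"

definition Nc :: "nat \<Rightarrow> (nat \<Rightarrow> real) \<Rightarrow> real \<Rightarrow> real \<Rightarrow> int" where
  "Nc n c t u = int (card {k\<in>{..<n}. c k < t}) + \<lceil>(1 + real (card {k\<in>{..<n}. c k = t})) * u\<rceil>"

lemma conf_pval_Nc: "conf_pval s n cal x u = real_of_int (Nc n (\<lambda>k. s (cal k)) (s x) u) / (real n + 1)"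
  by (simp add: conf_pval_def Nc_def)

definition clt :: "nat \<Rightarrow> (nat \<Rightarrow> real) \<Rightarrow> real \<Rightarrow> nat" where
  "clt n w t = card {k\<in>{..n}. w k < t}"
definition ceq :: "nat \<Rightarrow> (nat \<Rightarrow> real) \<Rightarrow> real \<Rightarrow> nat" where
  "ceq n w t = card {k\<in>{..n}. w k = t}"

definition pvs :: "nat \<Rightarrow> (nat \<Rightarrow> real) \<Rightarrow> int \<Rightarrow> real \<Rightarrow> real \<Rightarrow> real" where
  "pvs n w r t u = real_of_int (int (clt n w t) - (if r \<le> int (clt n w t) then 1 else 0)
      + \<lceil>(1 + real (ceq n w t) - (if int (clt n w t) < r \<and> r \<le> int (clt n w t + ceq n w t) then 1 else 0)) * u\<rceil>)
      / (real n + 1)"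

definition Qf :: "nat \<Rightarrow> (nat \<Rightarrow> real) \<Rightarrow> int \<Rightarrow> nat \<Rightarrow> real" where
  "Qf n w r k = (if int (clt n w (w k)) < r \<and> r \<le> int (clt n w (w k) + ceq n w (w k))
      then 1 / real (ceq n w (w k)) else 0)"

lemma card_lt_le_split:
  fixes w :: "nat \<Rightarrow> real" assumes "finite K"
  shows "card {k\<in>K. w k \<le> t} = card {k\<in>K. w k < t} + card {k\<in>K. w k = t}"
proof -
  have "{k\<in>K. w k \<le> t} = {k\<in>K. w k < t} \<union> {k\<in>K. w k = t}" by auto
  moreover have "card ({k\<in>K. w k < t} \<union> {k\<in>K. w k = t}) = card {k\<in>K. w k < t} + card {k\<in>K. w k = t}"
    using assms by (intro card_Un_disjoint) auto
  ultimately show ?thesis by simp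
qed

lemma card_lt_mono:
  fixes w :: "nat \<Rightarrow> real" assumes "finite K" "t \<le> t'"
  shows "card {k\<in>K. w k < t} \<le> card {k\<in>K. w k < t'}"
  using assms by (intro card_mono) auto

lemma card_le_lt_mono:
  fixes w :: "nat \<Rightarrow> real" assumes "finite K" "t < t'"
  shows "card {k\<in>K. w k \<le> t} \<le> card {k\<in>K. w k < t'}"
  using assms by (intro card_mono) auto

lemma card_upto_split:
  "card {k\<in>{..(n::nat)}. P k} = card {k\<in>{..<n}. P k} + (if P n then 1 else 0)"
proof -
  have "{k\<in>{..n}. P k} = {k\<in>{..<n}. P k} \<union> (if P n then {n} else {})"
    by (cases "P n") (auto intro: le_neq_implies_less less_imp_le)
  moreover have "card ({k\<in>{..<n}. P k} \<union> (if P n then {n} else {})) = card {k\<in>{..<n}. P k} + (if P n then 1 else 0)"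
    by (subst card_Un_disjoint) auto
  ultimately show ?thesis by simp
qed

lemma Nc_eq_pvs:
  fixes w :: "nat \<Rightarrow> real"
  assumes "int (card {k\<in>{..<n}. w k < w n}) < r"
    "r \<le> int (card {k\<in>{..<n}. w k < w n}) + int (card {k\<in>{..<n}. w k = w n}) + 1"
  shows "real_of_int (Nc n w t u) / (real n + 1) = pvs n w r t u"
proof -
  define a where "a = w n"
  define L where "L = card {k\<in>{..<n}. w k < a}"
  define E where "E = card {k\<in>{..<n}. w k = a}"
  have cltt: "clt n w t = card {k\<in>{..<n}. w k < t} + (if a < t then 1 else 0)"
    unfolding clt_def a_def by (rule card_upto_split)
  have ceqt: "ceq n w t = card {k\<in>{..<n}. w k = t} + (if a = t then 1 else 0)"
    unfolding ceq_def a_def by (rule card_upto_split)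
  have cla: "clt n w a = L" unfolding clt_def L_def a_def by (subst card_upto_split) simp
  have cea: "ceq n w a = E + 1" unfolding ceq_def E_def a_def by (subst card_upto_split) simp
  have r1: "int L < r" "r \<le> int L + int E + 1" using assms unfolding L_def E_def a_def by auto
  have i1: "(r \<le> int (clt n w t)) = (a < t)"
  proof (cases "a < t")
    case True
    have "card {k\<in>{..n}. w k \<le> a} \<le> clt n w t"
      unfolding clt_def using True by (intro card_le_lt_mono) auto
    moreover have "card {k\<in>{..n}. w k \<le> a} = L + E + 1"
      using cla cea card_lt_le_split[of "{..n}" w a] unfolding clt_def ceq_def by simp
    ultimately show ?thesis using True r1 by simp
  next
    case False
    have "clt n w t \<le> clt n w a" unfolding clt_def using False by (intro card_lt_mono) auto
    then show ?thesis using False r1 cla by simp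
  qed
  have i2: "(int (clt n w t) < r \<and> r \<le> int (clt n w t + ceq n w t)) = (a = t)"
  proof (cases "a = t")
    case True then show ?thesis using cla cea r1 by simp
  next
    case False
    show ?thesis
    proof (cases "a < t")
      case True then show ?thesis using i1 False by auto
    next
      case F2: False
      then have "t < a" using False by simp
      then have "card {k\<in>{..n}. w k \<le> t} \<le> clt n w a" unfolding clt_def by (intro card_le_lt_mono) auto
      moreover have "card {k\<in>{..n}. w k \<le> t} = clt n w t + ceq n w t"
        unfolding clt_def ceq_def by (rule card_lt_le_split) auto
      ultimately show ?thesis using cla r1 False by auto
    qed
  qed
  show ?thesis
    unfolding pvs_def Nc_def i1 i2 using cltt ceqt
    by (cases "a < t"; cases "a = t") (auto simp: a_def)
qed

lemma ceil_aux1: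
  fixes E u :: real assumes "0 \<le> u" "u \<le> 1"
  shows "\<lceil>(1 + E) * u\<rceil> \<le> 1 + \<lceil>E * u\<rceil>"
proof -
  have "(1 + E) * u = u + E * u" by (simp add: algebra_simps)
  then have "(1 + E) * u \<le> real_of_int (1 + \<lceil>E * u\<rceil>)"
    using assms le_of_int_ceiling[of "E*u"] by simp linarith
  then show ?thesis by (simp add: ceiling_le_iff)
qed

lemma ceil_aux2:
  fixes E u :: real assumes "0 \<le> u"
  shows "\<lceil>E * u\<rceil> \<le> \<lceil>(1 + E) * u\<rceil>"
  using assms by (intro ceiling_mono) (simp add: algebra_simps)

lemma pvs_mono:
  assumes "r \<le> r'" "0 \<le> u" "u \<le> 1"
  shows "pvs n w r t u \<le> pvs n w r' t u"
proof -
  define C where "C = int (clt n w t)"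
  define E where "E = real (ceq n w t)"
  have EE: "int (clt n w t + ceq n w t) = C + int (ceq n w t)" unfolding C_def by simp
  have a1: "\<lceil>(1 + E) * u\<rceil> \<le> 1 + \<lceil>(1 + E - 1) * u\<rceil>" using ceil_aux1[OF assms(2,3), of E] by simp
  have a2: "\<lceil>(1 + E - 1) * u\<rceil> \<le> \<lceil>(1 + E) * u\<rceil>" using ceil_aux2[OF assms(2), of E] by simp
  have "real_of_int (C - (if r \<le> C then 1 else 0) + \<lceil>(1 + E - (if C < r \<and> r \<le> C + int (ceq n w t) then 1 else 0)) * u\<rceil>)
     \<le> real_of_int (C - (if r' \<le> C then 1 else 0) + \<lceil>(1 + E - (if C < r' \<and> r' \<le> C + int (ceq n w t) then 1 else 0)) * u\<rceil>)"
    using a1 a2 assms(1) by auto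
  then show ?thesis unfolding pvs_def EE C_def[symmetric] E_def[symmetric]
    by (intro divide_right_mono) auto
qed

lemma Qf_cond_same:
  fixes w :: "nat \<Rightarrow> real"
  assumes "int (clt n w (w k)) < r" "r \<le> int (clt n w (w k) + ceq n w (w k))"
    "int (clt n w (w k')) < r" "r \<le> int (clt n w (w k') + ceq n w (w k'))"
  shows "w k = w k'"
proof (rule ccontr)
  assume "w k \<noteq> w k'"
  then consider "w k < w k'" | "w k' < w k" by linarith
  then show False
  proof cases
    case 1
    have "card {j\<in>{..n}. w j \<le> w k} \<le> clt n w (w k')" unfolding clt_def using 1 by (intro card_le_lt_mono) auto
    moreover have "card {j\<in>{..n}. w j \<le> w k} = clt n w (w k) + ceq n w (w k)"
      unfolding clt_def ceq_def by (rule card_lt_le_split) auto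
    ultimately show False using assms by linarith
  next
    case 2
    have "card {j\<in>{..n}. w j \<le> w k'} \<le> clt n w (w k)" unfolding clt_def using 2 by (intro card_le_lt_mono) auto
    moreover have "card {j\<in>{..n}. w j \<le> w k'} = clt n w (w k') + ceq n w (w k')"
      unfolding clt_def ceq_def by (rule card_lt_le_split) auto
    ultimately show False using assms by linarith
  qed
qed

lemma Qf_cond_exists:
  fixes w :: "nat \<Rightarrow> real"
  assumes "1 \<le> r" "r \<le> int n + 1"
  shows "\<exists>k\<le>n. int (clt n w (w k)) < r \<and> r \<le> int (clt n w (w k) + ceq n w (w k))"
proof -
  define V where "V = {t \<in> w ` {..n}. r \<le> int (card {j\<in>{..n}. w j \<le> t})}"
  have fin: "finite V" unfolding V_def by auto
  define m where "m = Max (w ` {..n})"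
  have mV: "m \<in> w ` {..n}" unfolding m_def by (intro Max_in) auto
  have "{j\<in>{..n}. w j \<le> m} = {..n}" unfolding m_def by (auto intro!: Max_ge)
  then have "m \<in> V" using mV assms unfolding V_def by auto
  then have ne: "V \<noteq> {}" by auto
  define v where "v = Min V"
  have vV: "v \<in> V" unfolding v_def using fin ne by (rule Min_in)
  then obtain k where k: "k \<le> n" "w k = v" unfolding V_def by auto
  have r2: "r \<le> int (card {j\<in>{..n}. w j \<le> v})" using vV unfolding V_def by auto
  have r1: "int (card {j\<in>{..n}. w j < v}) < r"
  proof (rule ccontr)
    assume a: "\<not> ?thesis"
    have "{j\<in>{..n}. w j < v} \<noteq> {}"
    proof
      assume e: "{j\<in>{..n}. w j < v} = {}"
      have "card {j\<in>{..n}. w j < v} = 0" by (subst e) (rule card.empty)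
      then show False using a assms by linarith
    qed
    define v' where "v' = Max (w ` {j\<in>{..n}. w j < v})"
    have v'in: "v' \<in> w ` {j\<in>{..n}. w j < v}" unfolding v'_def using \<open>{j\<in>{..n}. w j < v} \<noteq> {}\<close>
      by (intro Max_in) auto
    then have "v' < v" by auto
    have "{j\<in>{..n}. w j \<le> v'} = {j\<in>{..n}. w j < v}"
      using \<open>v' < v\<close> unfolding v'_def by (auto intro!: Max_ge)
    then have "v' \<in> V" using a v'in unfolding V_def by auto
    then have "v \<le> v'" unfolding v_def using fin by (simp add: Min_le)
    then show False using \<open>v' < v\<close> by simp
  qed
  have "card {j\<in>{..n}. w j \<le> v} = clt n w v + ceq n w v"
    unfolding clt_def ceq_def by (rule card_lt_le_split) auto
  then show ?thesis using k r1 r2 unfolding clt_def by (intro exI[of _ k]) auto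
qed

lemma Qf_sum:
  fixes w :: "nat \<Rightarrow> real"
  assumes "1 \<le> r" "r \<le> int n + 1"
  shows "(\<Sum>k\<le>n. Qf n w r k) = 1"
proof -
  obtain k0 where k0: "k0 \<le> n" "int (clt n w (w k0)) < r" "r \<le> int (clt n w (w k0) + ceq n w (w k0))"
    using Qf_cond_exists[OF assms] by blast
  define K where "K = {k\<in>{..n}. w k = w k0}"
  have eq: "Qf n w r k = (if k \<in> K then 1 / real (ceq n w (w k0)) else 0)" if "k \<le> n" for k
  proof (cases "int (clt n w (w k)) < r \<and> r \<le> int (clt n w (w k) + ceq n w (w k))")
    case True
    then have "w k = w k0" using Qf_cond_same[of n w k r k0] k0 by auto
    then show ?thesis using True that unfolding Qf_def K_def by auto
  next
    case False
    then have "w k \<noteq> w k0" using k0 by auto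
    then show ?thesis using False that unfolding Qf_def K_def by auto
  qed
  have "(\<Sum>k\<le>n. Qf n w r k) = (\<Sum>k\<le>n. (if k \<in> K then 1 / real (ceq n w (w k0)) else 0))"
    using eq by (intro sum.cong) auto
  also have "\<dots> = (\<Sum>k\<in>K. 1 / real (ceq n w (w k0)))"
    unfolding K_def by (subst sum.inter_filter[symmetric]) (auto simp: Collect_conj_eq)
  also have "\<dots> = real (card K) / real (ceq n w (w k0))" by simp
  also have "card K = ceq n w (w k0)" unfolding K_def ceq_def by simp
  also have "ceq n w (w k0) > 0" unfolding ceq_def using k0(1) by (auto simp: card_gt_0_iff)
  then have "real (ceq n w (w k0)) / real (ceq n w (w k0)) = 1" by simp
  finally show ?thesis .
qed

definition tr :: "nat \<Rightarrow> nat \<Rightarrow> nat \<Rightarrow> nat" where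
  "tr a b j = (if j = a then b else if j = b then a else j)"

lemma card_tr:
  assumes "k \<le> n"
  shows "card {j\<in>{..n}. P (tr k n j)} = card {j\<in>{..n}. P j}"
proof (rule bij_betw_same_card)
  show "bij_betw (tr k n) {j\<in>{..n}. P (tr k n j)} {j\<in>{..n}. P j}"
    by (rule bij_betwI[where g = "tr k n"]) (use assms in \<open>auto simp: tr_def\<close>)
qed

lemma clt_tr: "k \<le> n \<Longrightarrow> clt n (w \<circ> tr k n) t = clt n w t"
  unfolding clt_def o_def by (rule card_tr)
lemma ceq_tr: "k \<le> n \<Longrightarrow> ceq n (w \<circ> tr k n) t = ceq n w t"
  unfolding ceq_def o_def by (rule card_tr)
lemma pvs_tr: "k \<le> n \<Longrightarrow> pvs n (w \<circ> tr k n) r t u = pvs n w r t u"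
  unfolding pvs_def by (simp add: clt_tr ceq_tr)
lemma Qf_tr: "k \<le> n \<Longrightarrow> Qf n (w \<circ> tr k n) r n = Qf n w r k"
  unfolding Qf_def by (simp add: clt_tr ceq_tr tr_def)

lemma clampu_measurable[measurable]: "clampu \<in> borel_measurable borel"
  unfolding clampu_def by measurable

lemma clampu_id: "0 \<le> t \<Longrightarrow> t \<le> 1 \<Longrightarrow> clampu t = t"
  unfolding clampu_def by simp

lemma clampu_bounds: "0 \<le> clampu t" "clampu t \<le> 1"
  unfolding clampu_def by auto

lemma unif_ceil:
  fixes L E :: nat and r :: int
  shows "emeasure (uniform_measure lborel {0..1::real}) {t. int L + \<lceil>(1 + real E) * clampu t\<rceil> = r}
     = ennreal (if int L < r \<and> r \<le> int L + int E + 1 then 1 / (real E + 1) else 0)"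
proof -
  define S where "S = {t. int L + \<lceil>(1 + real E) * clampu t\<rceil> = r}"
  have Sm: "S \<in> sets borel" unfolding S_def by measurable
  define c where "c = r - int L"
  have inter: "{0..1} \<inter> S = {t\<in>{0..1}. real_of_int c - 1 < (1 + real E) * t \<and> (1 + real E) * t \<le> real_of_int c}"
  proof -
    have key: "(int L + \<lceil>a\<rceil> = r) \<longleftrightarrow> (real_of_int c - 1 < a \<and> a \<le> real_of_int c)" for a :: real
    proof -
      have "(int L + \<lceil>a\<rceil> = r) \<longleftrightarrow> \<lceil>a\<rceil> = c" by (auto simp: c_def)
      also have "\<dots> \<longleftrightarrow> (real_of_int c - 1 < a \<and> a \<le> real_of_int c)" by (rule ceiling_eq_iff)
      finally show ?thesis .
    qed
    show ?thesis unfolding S_def key by (auto simp: clampu_id)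
  qed
  have "emeasure lborel ({0..1} \<inter> S) = ennreal (if 1 \<le> c \<and> c \<le> int E + 1 then 1 / (real E + 1) else 0)"
  proof (cases "1 \<le> c \<and> c \<le> int E + 1")
    case True
    have "{0..1} \<inter> S = {(real_of_int c - 1) / (1 + real E) <.. real_of_int c / (1 + real E)}"
    proof -
      have pos: "0 < 1 + real E" by simp
      have c1: "real_of_int c \<le> 1 + real E" "1 \<le> real_of_int c" using True by linarith+
      have h1: "0 \<le> x" if "real_of_int c - 1 < (1 + real E) * x" for x
      proof (rule ccontr)
        assume "\<not> 0 \<le> x"
        then have "(1 + real E) * x < 0" using pos by (simp add: mult_pos_neg)
        then show False using that c1 by linarith
      qed
      have h2: "x \<le> 1" if "(1 + real E) * x \<le> real_of_int c" for x
      proof (rule ccontr)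
        assume "\<not> x \<le> 1"
        then have "1 + real E < (1 + real E) * x" using pos mult_strict_left_mono[of 1 x "1 + real E"] by simp
        then show False using that c1 by linarith
      qed
      show ?thesis unfolding inter using pos c1 h1 h2
        by (auto simp: field_simps)
    qed
    moreover have "(real_of_int c / (1 + real E)) - ((real_of_int c - 1) / (1 + real E)) = 1 / (real E + 1)"
      by (simp add: field_simps)
    moreover have "(real_of_int c - 1) / (1 + real E) \<le> real_of_int c / (1 + real E)"
      by (intro divide_right_mono) auto
    ultimately show ?thesis using True by (simp only: emeasure_lborel_Ioc) simp
  next
    case False
    have "{0..1} \<inter> S \<subseteq> {0..0}"
    proof
      fix t assume t: "t \<in> {0..1} \<inter> S"
      then have a: "real_of_int c - 1 < (1 + real E) * t" "(1 + real E) * t \<le> real_of_int c" "0 \<le> t" "t \<le> 1"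
        unfolding inter by auto
      have "(1 + real E) * t \<le> 1 + real E" using a by simp
      show "t \<in> {0..0}"
      proof (rule ccontr)
        assume "t \<notin> {0..0}"
        then have "0 < t" using a by auto
        then have "0 < (1 + real E) * t" by simp
        then have "1 \<le> c" using a by linarith
        moreover have "c \<le> int E + 1" using a \<open>(1 + real E) * t \<le> 1 + real E\<close> by linarith
        ultimately show False using False by simp
      qed
    qed
    then have "emeasure lborel ({0..1} \<inter> S) \<le> emeasure lborel {0..0::real}"
      by (intro emeasure_mono) auto
    then show ?thesis using False by simp
  qed
  then show ?thesis
  proof -
    have "(1 \<le> c \<and> c \<le> int E + 1) = (int L < r \<and> r \<le> int L + int E + 1)" unfolding c_def by linarith
    then show ?thesis
      unfolding S_def[symmetric] using Sm \<open>emeasure lborel ({0..1} \<inter> S) = _\<close> by (simp add: divide_ennreal_def)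
  qed
qed

definition BM :: "('m \<Rightarrow> real) measure" where "BM = PiM UNIV (\<lambda>_. borel)"

definition Yv :: "('d \<Rightarrow> real) \<Rightarrow> nat \<Rightarrow> (nat \<Rightarrow> 'w \<Rightarrow> 'd) \<Rightarrow> ('m \<Rightarrow> 'w \<Rightarrow> 'd)
    \<Rightarrow> ('m \<Rightarrow> 'w \<Rightarrow> real) \<Rightarrow> 'm set \<Rightarrow> 'm src \<Rightarrow> 'w \<Rightarrow> ('m \<Rightarrow> real)" where
  "Yv s n Xcal Xtest U inl k \<omega> = (case k of
      Cal c \<Rightarrow> (\<lambda>_. if c < n then s (Xcal c \<omega>) else 0)
    | Inl j \<Rightarrow> (\<lambda>_. s (Xtest j \<omega>))
    | Unif j \<Rightarrow> (\<lambda>_. U j \<omega>)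
    | Outl \<Rightarrow> (\<lambda>j. if j \<in> inl then 0 else s (Xtest j \<omega>)))"

definition Sset :: "nat \<Rightarrow> 'm set \<Rightarrow> 'm src set" where
  "Sset n inl = Cal ` {..<n} \<union> Inl ` inl \<union> range Unif \<union> {Outl}"

lemma const_fun_meas: "f \<in> borel_measurable N \<Longrightarrow> (\<lambda>\<omega> (_::'m). f \<omega>) \<in> measurable N BM"
  unfolding BM_def by (rule measurable_PiM_single') (auto simp: space_PiM)

lemma vec_fun_meas: "(\<And>j. (\<lambda>\<omega>. f j \<omega>) \<in> borel_measurable N) \<Longrightarrow> (\<lambda>\<omega> (j::'m). f j \<omega>) \<in> measurable N BM"
  unfolding BM_def by (rule measurable_PiM_single') (auto simp: space_PiM)

context
  fixes M :: "'w measure" and s :: "'d::topological_space \<Rightarrow> real" and n :: nat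
    and Xcal :: "nat \<Rightarrow> 'w \<Rightarrow> 'd" and Xtest :: "'m::finite \<Rightarrow> 'w \<Rightarrow> 'd" and U :: "'m \<Rightarrow> 'w \<Rightarrow> real"
    and inl :: "'m set"
  assumes PM: "prob_space M" and sm: "s \<in> borel_measurable borel"
    and Xc: "\<forall>i<n. Xcal i \<in> borel_measurable M"
    and Xt: "\<forall>j. Xtest j \<in> borel_measurable M"
    and Um: "\<forall>j. U j \<in> borel_measurable M"
    and ind: "prob_space.indep_sets M (src_sigma M Xcal Xtest U inl) (Sset n inl)"
begin

lemma Xt_m: "Xtest j \<in> borel_measurable M" using Xt by simp

lemma Yv_meas: "Yv s n Xcal Xtest U inl k \<in> measurable M BM"
proof -
  note Xt_m[measurable] sm[measurable]
  show ?thesis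
proof (cases k)
  case (Cal c)
  show ?thesis
  proof (cases "c < n")
    case True
    have [measurable]: "Xcal c \<in> borel_measurable M" using Xc True by simp
    have "(\<lambda>\<omega>. s (Xcal c \<omega>)) \<in> borel_measurable M" using sm by measurable
    then show ?thesis unfolding Cal Yv_def using True by (simp add: const_fun_meas)
  next
    case False
    then show ?thesis unfolding Cal Yv_def by (simp add: const_fun_meas)
  qed
next
  case (Inl j)
  have "(\<lambda>\<omega>. s (Xtest j \<omega>)) \<in> borel_measurable M" using Xt sm by measurable
  then show ?thesis unfolding Inl Yv_def by (simp add: const_fun_meas)
next
  case (Unif j)
  then show ?thesis unfolding Unif Yv_def using Um by (simp add: const_fun_meas)
next
  case Outl
  have "(\<lambda>\<omega>. if j \<in> inl then 0 else s (Xtest j \<omega>)) \<in> borel_measurable M" for j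
    using Xt sm by measurable
  then show ?thesis unfolding Outl Yv_def by (intro vec_fun_meas) simp
qed
qed

lemma gen_subset:
  assumes k: "k \<in> Sset n inl"
  shows "sigma_sets (space M) {Yv s n Xcal Xtest U inl k -` A \<inter> space M | A. A \<in> sets BM}
           \<subseteq> src_sigma M Xcal Xtest U inl k"
proof -
  have main: "sigma_sets (space M) {Yv s n Xcal Xtest U inl k -` A \<inter> space M | A. A \<in> sets BM} \<subseteq> sets N"
    if sp: "space N = space M" and mN: "Yv s n Xcal Xtest U inl k \<in> measurable N BM" for N :: "'w measure"
  proof -
    have "{Yv s n Xcal Xtest U inl k -` A \<inter> space M | A. A \<in> sets BM} \<subseteq> sets N"
      using measurable_sets[OF mN] sp by auto
    then have "sigma_sets (space N) {Yv s n Xcal Xtest U inl k -` A \<inter> space M | A. A \<in> sets BM} \<subseteq> sets N"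
      by (rule sets.sigma_sets_subset)
    then show ?thesis using sp by simp
  qed
  note sm[measurable]
  show ?thesis
  proof (cases k)
    case (Cal c)
    then have c: "c < n" using k unfolding Sset_def by auto
    let ?N = "vimage_algebra (space M) (Xcal c) borel"
    have "Xcal c \<in> measurable ?N borel" by (rule measurable_vimage_algebra1) auto
    then have "(\<lambda>\<omega>. s (Xcal c \<omega>)) \<in> borel_measurable ?N" using sm by measurable
    then have "Yv s n Xcal Xtest U inl k \<in> measurable ?N BM"
      unfolding Cal Yv_def using c by (simp add: const_fun_meas)
    then show ?thesis using main[of ?N] unfolding Cal src_sigma_def by simp
  next
    case (Inl j)
    let ?N = "vimage_algebra (space M) (Xtest j) borel"
    have "Xtest j \<in> measurable ?N borel" by (rule measurable_vimage_algebra1) auto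
    then have "(\<lambda>\<omega>. s (Xtest j \<omega>)) \<in> borel_measurable ?N" using sm by measurable
    then have "Yv s n Xcal Xtest U inl k \<in> measurable ?N BM"
      unfolding Inl Yv_def by (simp add: const_fun_meas)
    then show ?thesis using main[of ?N] unfolding Inl src_sigma_def by simp
  next
    case (Unif j)
    let ?N = "vimage_algebra (space M) (U j) borel"
    have "U j \<in> measurable ?N borel" by (rule measurable_vimage_algebra1) auto
    then have "Yv s n Xcal Xtest U inl k \<in> measurable ?N BM"
      unfolding Unif Yv_def by (simp add: const_fun_meas)
    then show ?thesis using main[of ?N] unfolding Unif src_sigma_def by simp
  next
    case Outl
    define G where "G = (\<Union>j\<in>-inl. {Xtest j -` B \<inter> space M | B. B \<in> sets borel})"
    let ?N = "sigma (space M) G"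
    have Gsub: "G \<subseteq> Pow (space M)" unfolding G_def by auto
    have spN: "space ?N = space M" using Gsub by (simp add: space_measure_of)
    have setsN: "sets ?N = sigma_sets (space M) G" using Gsub by (simp add: sets_measure_of)
    have "Xtest j \<in> measurable ?N borel" if "j \<notin> inl" for j
    proof (rule measurableI)
      fix A :: "'d set" assume "A \<in> sets borel"
      then have "Xtest j -` A \<inter> space M \<in> G" unfolding G_def using that by auto
      then show "Xtest j -` A \<inter> space ?N \<in> sets ?N" unfolding spN setsN by auto
    qed auto
    then have "(\<lambda>\<omega>. if j \<in> inl then 0 else s (Xtest j \<omega>)) \<in> borel_measurable ?N" for j
      using sm by (cases "j \<in> inl") (auto intro: measurable_compose)
    then have "Yv s n Xcal Xtest U inl k \<in> measurable ?N BM"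
      unfolding Outl Yv_def by (intro vec_fun_meas) simp
    then show ?thesis using main[of ?N] spN setsN unfolding Outl src_sigma_def G_def by simp
  qed
qed

lemma indep_Yv: "prob_space.indep_vars M (\<lambda>_. BM) (Yv s n Xcal Xtest U inl) (Sset n inl)"
proof -
  interpret prob_space M by (rule PM)
  show ?thesis unfolding indep_vars_def
  proof
    show "\<forall>k\<in>Sset n inl. random_variable BM (Yv s n Xcal Xtest U inl k)" using Yv_meas by auto
    show "indep_sets (\<lambda>k. sigma_sets (space M) {Yv s n Xcal Xtest U inl k -` A \<inter> space M | A. A \<in> sets BM}) (Sset n inl)"
      by (rule indep_sets_mono_sets[OF ind]) (use gen_subset in auto)
  qed
qed

lemma joint_law:
  "distr M (PiM (Sset n inl) (\<lambda>_. BM)) (\<lambda>\<omega>. \<lambda>k\<in>Sset n inl. Yv s n Xcal Xtest U inl k \<omega>)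
     = PiM (Sset n inl) (\<lambda>k. distr M BM (Yv s n Xcal Xtest U inl k))"
proof -
  interpret prob_space M by (rule PM)
  have ne: "Sset n inl \<noteq> {}" unfolding Sset_def by auto
  show ?thesis
    using indep_vars_iff_distr_eq_PiM[OF ne Yv_meas] indep_Yv by simp
qed

end

definition cv :: "('m src \<Rightarrow> 'm \<Rightarrow> real) \<Rightarrow> nat \<Rightarrow> real" where
  "cv x k = x (Cal k) undefined"
definition wv :: "nat \<Rightarrow> 'm \<Rightarrow> ('m src \<Rightarrow> 'm \<Rightarrow> real) \<Rightarrow> nat \<Rightarrow> real" where
  "wv n i x k = (if k < n then x (Cal k) undefined else x (Inl i) undefined)"
definition tv :: "'m set \<Rightarrow> ('m src \<Rightarrow> 'm \<Rightarrow> real) \<Rightarrow> 'm \<Rightarrow> real" where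
  "tv inl x j = (if j \<in> inl then x (Inl j) undefined else x Outl j)"
definition uv :: "('m src \<Rightarrow> 'm \<Rightarrow> real) \<Rightarrow> 'm \<Rightarrow> real" where
  "uv x j = clampu (x (Unif j) undefined)"
definition Pv :: "nat \<Rightarrow> 'm set \<Rightarrow> ('m src \<Rightarrow> 'm \<Rightarrow> real) \<Rightarrow> 'm \<Rightarrow> real" where
  "Pv n inl x j = real_of_int (Nc n (cv x) (tv inl x j) (uv x j)) / (real n + 1)"
definition Phi :: "nat \<Rightarrow> 'm set \<Rightarrow> 'm \<Rightarrow> int \<Rightarrow> ('m src \<Rightarrow> 'm \<Rightarrow> real) \<Rightarrow> 'm \<Rightarrow> real" where
  "Phi n inl i r x j = (if j = i then real_of_int r / (real n + 1) else Pv n inl x j)"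
definition Phi2 :: "nat \<Rightarrow> 'm set \<Rightarrow> 'm \<Rightarrow> int \<Rightarrow> ('m src \<Rightarrow> 'm \<Rightarrow> real) \<Rightarrow> 'm \<Rightarrow> real" where
  "Phi2 n inl i r x j = (if j = i then real_of_int r / (real n + 1)
      else pvs n (wv n i x) r (tv inl x j) (uv x j))"

lemma ceil_meas[measurable]:
  fixes f :: "'a \<Rightarrow> real"
  assumes "f \<in> borel_measurable N"
  shows "(\<lambda>x. real_of_int \<lceil>f x\<rceil>) \<in> borel_measurable N"
proof -
  have "(\<lambda>y::real. real_of_int \<lceil>y\<rceil>) \<in> borel_measurable borel"
    using measurable_compose[OF measurable_real_ceiling, of real_of_int borel] by simp
  from measurable_compose[OF assms this] show ?thesis by simp
qed
lemma card_real_sum: "finite K \<Longrightarrow> real (card {k\<in>K. P k}) = (\<Sum>k\<in>K. if P k then 1 else 0)"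
  by (simp add: sum.If_cases Int_def)

lemma card_lt_meas:
  fixes f :: "'a \<Rightarrow> 'k \<Rightarrow> real"
  assumes "finite K" "\<And>k. (\<lambda>x. f x k) \<in> borel_measurable N" "g \<in> borel_measurable N"
  shows "(\<lambda>x. real (card {k\<in>K. f x k < g x})) \<in> borel_measurable N"
proof -
  have [measurable]: "(\<lambda>x. f x k) \<in> borel_measurable N" for k using assms by simp
  have [measurable]: "g \<in> borel_measurable N" using assms by simp
  have "{x\<in>space N. f x k < g x} \<in> sets N" for k using assms(2)[of k] assms(3) by (rule borel_measurable_less)
  then show ?thesis unfolding card_real_sum[OF assms(1)]
    by (intro borel_measurable_sum measurable_If measurable_const) auto
qed

lemma card_eq_meas:
  fixes f :: "'a \<Rightarrow> 'k \<Rightarrow> real"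
  assumes "finite K" "\<And>k. (\<lambda>x. f x k) \<in> borel_measurable N" "g \<in> borel_measurable N"
  shows "(\<lambda>x. real (card {k\<in>K. f x k = g x})) \<in> borel_measurable N"
proof -
  have [measurable]: "(\<lambda>x. f x k) \<in> borel_measurable N" for k using assms by simp
  have [measurable]: "g \<in> borel_measurable N" using assms by simp
  have "{x\<in>space N. f x k = g x} \<in> sets N" for k using assms(2)[of k] assms(3) by (rule borel_measurable_eq)
  then show ?thesis unfolding card_real_sum[OF assms(1)]
    by (intro borel_measurable_sum measurable_If measurable_const) auto
qed

lemma pvs_real:
  "pvs n w r t u = (real (clt n w t) - (if real_of_int r \<le> real (clt n w t) then 1 else 0)
     + real_of_int \<lceil>(1 + real (ceq n w t) - (if real (clt n w t) < real_of_int r \<and> real_of_int r \<le> real (clt n w t) + real (ceq n w t) then 1 else 0)) * u\<rceil>) / (real n + 1)"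
proof -
  have e1: "(r \<le> int (clt n w t)) = (real_of_int r \<le> real (clt n w t))"
    by (metis of_int_le_iff of_int_of_nat_eq)
  have e2: "(int (clt n w t) < r \<and> r \<le> int (clt n w t + ceq n w t)) =
     (real (clt n w t) < real_of_int r \<and> real_of_int r \<le> real (clt n w t) + real (ceq n w t))"
    by (metis of_int_less_iff of_int_le_iff of_int_of_nat_eq of_nat_add)
  show ?thesis unfolding pvs_def e1 e2 by simp
qed

lemma pvs_meas:
  assumes "\<And>k. (\<lambda>x. w x k) \<in> borel_measurable N" "t \<in> borel_measurable N" "u \<in> borel_measurable N"
  shows "(\<lambda>x. pvs n (w x) r (t x) (u x)) \<in> borel_measurable N"
proof -
  have [measurable]: "(\<lambda>x. real (clt n (w x) (t x))) \<in> borel_measurable N"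
    unfolding clt_def by (rule card_lt_meas) (use assms in auto)
  have [measurable]: "(\<lambda>x. real (ceq n (w x) (t x))) \<in> borel_measurable N"
    unfolding ceq_def by (rule card_eq_meas) (use assms in auto)
  have [measurable]: "u \<in> borel_measurable N" by fact
  show ?thesis unfolding pvs_real by measurable
qed

lemma Nc_real: "real_of_int (Nc n c t u) = real (card {k\<in>{..<n}. c k < t})
   + real_of_int \<lceil>(1 + real (card {k\<in>{..<n}. c k = t})) * u\<rceil>"
  unfolding Nc_def by simp

lemma Nc_meas:
  assumes "\<And>k. (\<lambda>x. c x k) \<in> borel_measurable N" "t \<in> borel_measurable N" "u \<in> borel_measurable N"
  shows "(\<lambda>x. real_of_int (Nc n (c x) (t x) (u x))) \<in> borel_measurable N"
proof -
  have [measurable]: "(\<lambda>x. real (card {k\<in>{..<n}. c x k < t x})) \<in> borel_measurable N"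
    by (rule card_lt_meas) (use assms in auto)
  have [measurable]: "(\<lambda>x. real (card {k\<in>{..<n}. c x k = t x})) \<in> borel_measurable N"
    by (rule card_eq_meas) (use assms in auto)
  have [measurable]: "u \<in> borel_measurable N" by fact
  show ?thesis unfolding Nc_real by measurable
qed

lemma Qf_real: "Qf n w r k = (if real (clt n w (w k)) < real_of_int r \<and> real_of_int r \<le> real (clt n w (w k)) + real (ceq n w (w k))
      then 1 / real (ceq n w (w k)) else 0)"
proof -
  have e2: "(int (clt n w (w k)) < r \<and> r \<le> int (clt n w (w k) + ceq n w (w k))) =
     (real (clt n w (w k)) < real_of_int r \<and> real_of_int r \<le> real (clt n w (w k)) + real (ceq n w (w k)))"
    by (metis of_int_less_iff of_int_le_iff of_int_of_nat_eq of_nat_add)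
  show ?thesis unfolding Qf_def e2 by simp
qed

lemma Qf_meas:
  assumes "\<And>k. (\<lambda>x. w x k) \<in> borel_measurable N"
  shows "(\<lambda>x. Qf n (w x) r k) \<in> borel_measurable N"
proof -
  have [measurable]: "(\<lambda>x. real (clt n (w x) (w x k))) \<in> borel_measurable N"
    unfolding clt_def by (rule card_lt_meas) (use assms in auto)
  have [measurable]: "(\<lambda>x. real (ceq n (w x) (w x k))) \<in> borel_measurable N"
    unfolding ceq_def by (rule card_eq_meas) (use assms in auto)
  show ?thesis unfolding Qf_real by measurable
qed

lemma comp_meas:
  assumes "m \<in> X" "\<And>k. sets (\<nu> k) = sets (BM :: ('m \<Rightarrow> real) measure)"
  shows "(\<lambda>x. x m j) \<in> borel_measurable (PiM X \<nu>)"
proof -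
  have "(\<lambda>x. x m) \<in> measurable (PiM X \<nu>) (\<nu> m)" using assms(1) by (rule measurable_component_singleton)
  moreover have "measurable (PiM X \<nu>) (\<nu> m) = measurable (PiM X \<nu>) BM"
    by (rule measurable_cong_sets[OF refl assms(2)])
  ultimately have 1: "(\<lambda>x. x m) \<in> measurable (PiM X \<nu>) BM" by simp
  have 2: "(\<lambda>f. f j) \<in> borel_measurable (BM :: ('m \<Rightarrow> real) measure)"
    unfolding BM_def by (rule measurable_component_singleton) simp
  show ?thesis using measurable_compose[OF 1 2] by simp
qed

lemma grid_sets:
  fixes f :: "'a \<Rightarrow> 'm::finite \<Rightarrow> real"
  assumes "finite V" "\<And>x j. x \<in> space N \<Longrightarrow> f x j \<in> V" "\<And>j. (\<lambda>x. f x j) \<in> borel_measurable N"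
  shows "{x\<in>space N. f x \<in> A} \<in> sets N"
proof -
  define G where "G = {g::'m \<Rightarrow> real. \<forall>j. g j \<in> V}"
  have G: "G = PiE UNIV (\<lambda>_. V)" unfolding G_def by (auto simp: PiE_def Pi_def)
  have finG: "finite G" unfolding G using assms(1) by (intro finite_PiE) (simp_all add: finite_UNIV)
  have eq: "{x\<in>space N. f x \<in> A} = (\<Union>g\<in>G \<inter> A. \<Inter>j. {x\<in>space N. f x j = g j})"
  proof (intro equalityI subsetI)
    fix x assume x: "x \<in> {x\<in>space N. f x \<in> A}"
    then have "f x \<in> G \<inter> A" using assms(2) unfolding G_def by auto
    then show "x \<in> (\<Union>g\<in>G \<inter> A. \<Inter>j. {x\<in>space N. f x j = g j})" using x by blast
  next
    fix x assume "x \<in> (\<Union>g\<in>G \<inter> A. \<Inter>j. {x\<in>space N. f x j = g j})"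
    then obtain g where g: "g \<in> A" "\<And>j. x \<in> space N \<and> f x j = g j" by blast
    then have "f x = g" by (intro ext) blast
    then show "x \<in> {x\<in>space N. f x \<in> A}" using g by auto
  qed
  have "{x\<in>space N. f x j = c} \<in> sets N" for j c
  proof -
    have [measurable]: "(\<lambda>x. f x j) \<in> borel_measurable N" by fact
    show ?thesis by measurable
  qed
  note c = this
  show ?thesis unfolding eq
  proof (rule sets.finite_UN)
    show "finite (G \<inter> A)" using finG by simp
    fix g assume "g \<in> G \<inter> A"
    show "(\<Inter>j. {x\<in>space N. f x j = g j}) \<in> sets N"
      by (rule sets.finite_INT) (auto simp: c)
  qed
qed

lemma ceil_bounds:
  fixes a :: real assumes "0 \<le> a" "a \<le> real m"
  shows "0 \<le> \<lceil>a\<rceil>" "\<lceil>a\<rceil> \<le> int m"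
proof -
  show "0 \<le> \<lceil>a\<rceil>" using assms(1) by (simp add: zero_le_ceiling) 
  show "\<lceil>a\<rceil> \<le> int m" using assms(2) by (simp add: ceiling_le_iff)
qed

definition gridV :: "nat \<Rightarrow> real set" where
  "gridV n = (\<lambda>z::int. real_of_int z / (real n + 1)) ` {-(3 * int n + 5) .. 3 * int n + 5}"

lemma gridV_finite: "finite (gridV n)" unfolding gridV_def by simp

lemma gridV_in: "\<bar>z\<bar> \<le> 3 * int n + 5 \<Longrightarrow> real_of_int z / (real n + 1) \<in> gridV n"
  unfolding gridV_def by (intro imageI) auto

lemma card_lt_eq_le:
  fixes c :: "nat \<Rightarrow> real" assumes "finite K"
  shows "card {k\<in>K. c k < t} + card {k\<in>K. c k = t} \<le> card K"
proof -
  have "card {k\<in>K. c k < t} + card {k\<in>K. c k = t} = card {k\<in>K. c k \<le> t}"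
    using card_lt_le_split[OF assms] by simp
  also have "\<dots> \<le> card K" using assms by (intro card_mono) auto
  finally show ?thesis .
qed

lemma Nc_bounds:
  assumes "0 \<le> u" "u \<le> 1"
  shows "0 \<le> Nc n c t u" "Nc n c t u \<le> int n + 1"
proof -
  define L where "L = card {k\<in>{..<n}. c k < t}"
  define E where "E = card {k\<in>{..<n}. c k = t}"
  have LE: "L + E \<le> n" unfolding L_def E_def using card_lt_eq_le[of "{..<n}" c t] by simp
  have a: "0 \<le> (1 + real E) * u" "(1 + real E) * u \<le> real (1 + E)"
    using assms by (auto simp: mult_left_le)
  have "0 \<le> \<lceil>(1 + real E) * u\<rceil>" "\<lceil>(1 + real E) * u\<rceil> \<le> int (1 + E)"
    using ceil_bounds[OF a] by auto
  then show "0 \<le> Nc n c t u" "Nc n c t u \<le> int n + 1"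
    unfolding Nc_def L_def[symmetric] E_def[symmetric] using LE by linarith+
qed

lemma clt_ceq_le: "clt n w t + ceq n w t \<le> n + 1"
  unfolding clt_def ceq_def using card_lt_eq_le[of "{..n}" w t] by simp

lemma pvs_grid:
  assumes "0 \<le> u" "u \<le> 1"
  shows "pvs n w r t u \<in> gridV n"
proof -
  define C where "C = clt n w t"
  define E where "E = ceq n w t"
  have CE: "C + E \<le> n + 1" unfolding C_def E_def by (rule clt_ceq_le)
  define b where "b = (if int C < r \<and> r \<le> int (C + E) then 1 else (0::real))"
  define z where "z = (1 + real E - b) * u"
  have b: "0 \<le> b" "b \<le> 1" unfolding b_def by auto
  have nn: "0 \<le> 1 + real E - b" using b by simp
  have z1: "0 \<le> z" unfolding z_def using nn assms by simp
  have "z \<le> 1 + real E - b" unfolding z_def using nn assms by (simp add: mult_left_le)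
  then have z: "0 \<le> z" "z \<le> real (1 + E)" using z1 b by auto
  note cz = ceil_bounds[OF z]
  define b1 where "b1 = (if r \<le> int C then 1 else (0::int))"
  have b1: "0 \<le> b1" "b1 \<le> 1" unfolding b1_def by auto
  have CE': "int C + int E \<le> int n + 1" using CE by linarith
  have q1: "int C - b1 + \<lceil>z\<rceil> \<le> 3 * int n + 5" using cz b1 CE' by linarith
  have q2: "- (int C - b1 + \<lceil>z\<rceil>) \<le> 3 * int n + 5" using cz b1 CE' by linarith
  have "\<bar>int C - b1 + \<lceil>z\<rceil>\<bar> \<le> 3 * int n + 5"
    using q1 q2 by (simp only: abs_le_iff)
  then have "\<bar>int C - (if r \<le> int C then 1 else 0) + \<lceil>z\<rceil>\<bar> \<le> 3 * int n + 5"
    unfolding b1_def .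
  note bd = this
  have eq: "pvs n w r t u = real_of_int (int C - (if r \<le> int C then 1 else 0) + \<lceil>z\<rceil>) / (real n + 1)"
    unfolding pvs_def C_def E_def z_def b_def by simp
  show ?thesis unfolding eq by (rule gridV_in[OF bd])
qed

lemma Nc_grid:
  assumes "0 \<le> u" "u \<le> 1"
  shows "real_of_int (Nc n c t u) / (real n + 1) \<in> gridV n"
proof -
  have "0 \<le> Nc n c t u" "Nc n c t u \<le> int n + 1" using Nc_bounds[OF assms] by auto
  then have "\<bar>Nc n c t u\<bar> \<le> 3 * int n + 5" by linarith
  then show ?thesis by (rule gridV_in)
qed

lemma r_grid: "1 \<le> r \<Longrightarrow> r \<le> int n + 1 \<Longrightarrow> real_of_int r / (real n + 1) \<in> gridV n"
proof -
  assume "1 \<le> r" "r \<le> int n + 1"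
  then have "\<bar>r\<bar> \<le> 3 * int n + 5" by linarith
  then show ?thesis by (rule gridV_in)
qed

lemma uv_bounds: "0 \<le> uv x j" "uv x j \<le> 1"
  unfolding uv_def by (rule clampu_bounds)+

lemma Nc_cong: "(\<And>k. k < n \<Longrightarrow> c k = c' k) \<Longrightarrow> Nc n c t u = Nc n c' t u"
proof -
  assume a: "\<And>k. k < n \<Longrightarrow> c k = c' k"
  have "{k\<in>{..<n}. c k < t} = {k\<in>{..<n}. c' k < t}" "{k\<in>{..<n}. c k = t} = {k\<in>{..<n}. c' k = t}"
    using a by auto
  then show ?thesis unfolding Nc_def by simp
qed

lemma clt_cong: "(\<And>k. k \<le> n \<Longrightarrow> w k = w' k) \<Longrightarrow> clt n w t = clt n w' t"
proof -
  assume a: "\<And>k. k \<le> n \<Longrightarrow> w k = w' k"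
  have "{k\<in>{..n}. w k < t} = {k\<in>{..n}. w' k < t}" using a by auto
  then show ?thesis unfolding clt_def by simp
qed
lemma ceq_cong: "(\<And>k. k \<le> n \<Longrightarrow> w k = w' k) \<Longrightarrow> ceq n w t = ceq n w' t"
proof -
  assume a: "\<And>k. k \<le> n \<Longrightarrow> w k = w' k"
  have "{k\<in>{..n}. w k = t} = {k\<in>{..n}. w' k = t}" using a by auto
  then show ?thesis unfolding ceq_def by simp
qed
lemma pvs_cong: "(\<And>k. k \<le> n \<Longrightarrow> w k = w' k) \<Longrightarrow> pvs n w r t u = pvs n w' r t u"
  unfolding pvs_def using clt_cong[of n w w'] ceq_cong[of n w w'] by simp
lemma Qf_cong: "(\<And>k. k \<le> n \<Longrightarrow> w k = w' k) \<Longrightarrow> j \<le> n \<Longrightarrow> Qf n w r j = Qf n w' r j"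
  unfolding Qf_def using clt_cong[of n w w'] ceq_cong[of n w w'] by simp

lemma space_BM: "space BM = UNIV"
  unfolding BM_def by (auto simp: space_PiM)

definition tau :: "nat \<Rightarrow> 'm \<Rightarrow> nat \<Rightarrow> 'm src \<Rightarrow> 'm src" where
  "tau n i k m = (if k < n then (if m = Cal k then Inl i else if m = Inl i then Cal k else m) else m)"

context
  fixes \<nu> :: "'m::finite src \<Rightarrow> ('m \<Rightarrow> real) measure" and n :: nat and inl :: "'m set" and i :: 'm
  assumes prob: "\<And>k. prob_space (\<nu> k)"
    and sets\<nu>: "\<And>k. sets (\<nu> k) = sets BM"
    and iin: "i \<in> inl"
    and sym\<nu>: "\<And>k. k < n \<Longrightarrow> \<nu> (Cal k) = \<nu> (Inl i)"
    and unif\<nu>: "\<nu> (Unif i) = distr (uniform_measure lborel {0..1}) BM (\<lambda>t _. t)"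
begin

lemma space\<nu>: "space (\<nu> k) = UNIV"
  using sets_eq_imp_space_eq[OF sets\<nu>] space_BM by simp

lemma PPS: "product_prob_space \<nu>"
proof (intro product_prob_space.intro product_prob_space_axioms.intro)
  show "product_sigma_finite \<nu>" unfolding product_sigma_finite_def
    by (intro allI prob_space_imp_sigma_finite prob)
qed (rule prob)

lemma wv_meas: "Cal ` {..<n} \<subseteq> X \<Longrightarrow> Inl i \<in> X \<Longrightarrow> (\<lambda>x. wv n i x k) \<in> borel_measurable (PiM X \<nu>)"
  unfolding wv_def by (cases "k < n") (auto intro!: comp_meas[OF _ sets\<nu>])

lemma tv_meas: "Inl ` inl \<subseteq> X \<Longrightarrow> Outl \<in> X \<Longrightarrow> (\<lambda>x. tv inl x j) \<in> borel_measurable (PiM X \<nu>)"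
  unfolding tv_def by (cases "j \<in> inl") (auto intro!: comp_meas[OF _ sets\<nu>])

lemma uv_meas: "Unif j \<in> X \<Longrightarrow> (\<lambda>x. uv x j) \<in> borel_measurable (PiM X \<nu>)"
  unfolding uv_def by (rule measurable_compose[OF comp_meas[OF _ sets\<nu>] clampu_measurable])

lemma S_split: "Sset n inl = insert (Unif i) (Sset n inl - {Unif i})"
  unfolding Sset_def by auto

lemma S_fin: "finite (Sset n inl)" unfolding Sset_def by auto

lemma Pv_wv: "Pv n inl x j = real_of_int (Nc n (wv n i x) (tv inl x j) (uv x j)) / (real n + 1)"
  unfolding Pv_def by (subst Nc_cong[of n "cv x" "wv n i x"]) (auto simp: cv_def wv_def)

lemma Pv_meas: "(\<lambda>x. Pv n inl x j) \<in> borel_measurable (PiM (Sset n inl) \<nu>)"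
proof -
  have [measurable]: "(\<lambda>x. real_of_int (Nc n (wv n i x) (tv inl x j) (uv x j))) \<in> borel_measurable (PiM (Sset n inl) \<nu>)"
    by (intro Nc_meas wv_meas tv_meas uv_meas) (auto simp: Sset_def iin)
  show ?thesis unfolding Pv_wv by measurable
qed

lemma F_sets: "{x\<in>space (PiM (Sset n inl) \<nu>). Pv n inl x \<in> A} \<in> sets (PiM (Sset n inl) \<nu>)"
proof (rule grid_sets[OF gridV_finite])
  show "Pv n inl x j \<in> gridV n" for x j unfolding Pv_def by (rule Nc_grid[OF uv_bounds])
  show "(\<lambda>x. Pv n inl x j) \<in> borel_measurable (PiM (Sset n inl) \<nu>)" for j by (rule Pv_meas)
qed

lemma Phi2_meas: "(\<lambda>x. Phi2 n inl i r x j) \<in> borel_measurable (PiM (Sset n inl - {Unif i}) \<nu>)"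
proof (cases "j = i")
  case True then show ?thesis unfolding Phi2_def by simp
next
  case False
  have "(\<lambda>x. pvs n (wv n i x) r (tv inl x j) (uv x j)) \<in> borel_measurable (PiM (Sset n inl - {Unif i}) \<nu>)"
    by (intro pvs_meas wv_meas tv_meas uv_meas) (use False in \<open>auto simp: Sset_def iin\<close>)
  then show ?thesis unfolding Phi2_def using False by simp
qed

lemma G_sets:
  assumes "1 \<le> r" "r \<le> int n + 1"
  shows "{x\<in>space (PiM (Sset n inl - {Unif i}) \<nu>). Phi2 n inl i r x \<in> A} \<in> sets (PiM (Sset n inl - {Unif i}) \<nu>)"
proof (rule grid_sets[OF gridV_finite])
  show "Phi2 n inl i r x j \<in> gridV n" for x j
  proof (cases "j = i")
    case True then show ?thesis unfolding Phi2_def using r_grid[OF assms] by simp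
  next
    case False then show ?thesis unfolding Phi2_def
      using pvs_grid[OF uv_bounds(1)[of x j] uv_bounds(2)[of x j], of n "wv n i x" r "tv inl x j"] by simp
  qed
  show "(\<lambda>x. Phi2 n inl i r x j) \<in> borel_measurable (PiM (Sset n inl - {Unif i}) \<nu>)" for j by (rule Phi2_meas)
qed

lemma Qf_wv_meas: "(\<lambda>x. Qf n (wv n i x) r k) \<in> borel_measurable (PiM (Sset n inl - {Unif i}) \<nu>)"
  by (intro Qf_meas wv_meas) (auto simp: Sset_def iin)


lemma qf_eq:
  fixes w :: "nat \<Rightarrow> real"
  shows "(if int (card {k\<in>{..<n}. w k < w n}) < r \<and> r \<le> int (card {k\<in>{..<n}. w k < w n}) + int (card {k\<in>{..<n}. w k = w n}) + 1
      then 1 / (real (card {k\<in>{..<n}. w k = w n}) + 1) else 0) = Qf n w r n"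
proof -
  have a: "clt n w (w n) = card {k\<in>{..<n}. w k < w n}" unfolding clt_def by (subst card_upto_split) simp
  have b: "ceq n w (w n) = card {k\<in>{..<n}. w k = w n} + 1" unfolding ceq_def by (subst card_upto_split) simp
  show ?thesis unfolding Qf_def a b by (simp add: add.commute)
qed

lemma space_Pi\<nu>: "space (PiM X \<nu>) = PiE X (\<lambda>_. UNIV)"
  by (simp add: space_PiM space\<nu>)

lemma Sy_sets: "{y. Nc n c t0 (clampu (y undefined)) = r} \<in> sets (\<nu> (Unif i))"
proof -
  have [measurable]: "(\<lambda>y::'m\<Rightarrow>real. real_of_int (Nc n c t0 (clampu (y undefined)))) \<in> borel_measurable BM"
  proof (rule Nc_meas)
    have "(\<lambda>y::'m\<Rightarrow>real. y undefined) \<in> borel_measurable (PiM UNIV (\<lambda>_. borel))"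
      by (rule measurable_component_singleton) simp
    then show "(\<lambda>y. clampu (y undefined)) \<in> borel_measurable (BM :: ('m \<Rightarrow> real) measure)"
      unfolding BM_def using clampu_measurable by (rule measurable_compose)
  qed auto
  have "{y::'m\<Rightarrow>real. y \<in> space BM \<and> real_of_int (Nc n c t0 (clampu (y undefined))) = real_of_int r} \<in> sets BM"
    by measurable
  then show ?thesis by (simp add: space_BM sets\<nu>)
qed

lemma emeasure_Sy:
  "emeasure (\<nu> (Unif i)) {y. Nc n w t0 (clampu (y undefined)) = r}
   = ennreal (if int (card {k\<in>{..<n}. w k < t0}) < r \<and> r \<le> int (card {k\<in>{..<n}. w k < t0}) + int (card {k\<in>{..<n}. w k = t0}) + 1
      then 1 / (real (card {k\<in>{..<n}. w k = t0}) + 1) else 0)"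
proof -
  let ?Uni = "uniform_measure lborel {0..1::real}"
  have id: "(\<lambda>t::real. t) \<in> borel_measurable ?Uni" by (rule measurable_ident_sets) simp
  have m: "(\<lambda>t (z::'m). t) \<in> measurable ?Uni BM" using id by (rule const_fun_meas)
  have Sy: "{y::'m\<Rightarrow>real. Nc n w t0 (clampu (y undefined)) = r} \<in> sets BM"
    using Sy_sets[of w t0 r] unfolding sets\<nu>[of "Unif i"] .
  have "emeasure (\<nu> (Unif i)) {y. Nc n w t0 (clampu (y undefined)) = r}
      = emeasure ?Uni ((\<lambda>t (z::'m). t) -` {y. Nc n w t0 (clampu (y undefined)) = r} \<inter> space ?Uni)"
    unfolding unif\<nu> by (rule emeasure_distr[OF m Sy])
  also have "(\<lambda>t (z::'m). t) -` {y. Nc n w t0 (clampu (y undefined)) = r} \<inter> space ?Uni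
     = {t. int (card {k\<in>{..<n}. w k < t0}) + \<lceil>(1 + real (card {k\<in>{..<n}. w k = t0})) * clampu t\<rceil> = r}"
    by (auto simp: Nc_def)
  finally show ?thesis using unif_ceil by simp
qed

lemma Nc_div_eq: "(real_of_int a / (real n + 1) = real_of_int b / (real n + 1)) = (a = b)"
proof -
  have "real n + 1 \<noteq> 0" by simp
  then show ?thesis by (simp add: divide_cancel_right)
qed

lemma inner:
  assumes x: "x \<in> space (PiM (Sset n inl - {Unif i}) \<nu>)"
  shows "(\<integral>\<^sup>+ y. indicator {x\<in>space (PiM (Sset n inl) \<nu>). Pv n inl x \<in> A \<and> Pv n inl x i = real_of_int r / (real n + 1)} (x(Unif i := y)) \<partial>\<nu> (Unif i))
     = indicator {x\<in>space (PiM (Sset n inl - {Unif i}) \<nu>). Phi n inl i r x \<in> A} x * ennreal (Qf n (wv n i x) r n)"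
proof -
  define t0 where "t0 = tv inl x i"
  define Sy where "Sy = {y::'m \<Rightarrow> real. Nc n (wv n i x) t0 (clampu (y undefined)) = r}"
  define F where "F = {x\<in>space (PiM (Sset n inl) \<nu>). Pv n inl x \<in> A \<and> Pv n inl x i = real_of_int r / (real n + 1)}"
  define G where "G = {x\<in>space (PiM (Sset n inl - {Unif i}) \<nu>). Phi n inl i r x \<in> A}"
  have mem: "x(Unif i := y) \<in> space (PiM (Sset n inl) \<nu>)" for y
    using x unfolding space_Pi\<nu> by (auto simp: PiE_def extensional_def Sset_def)
  have wv_upd: "wv n i (x(Unif i := y)) = wv n i x" for y by (auto simp: wv_def)
  have tv_upd: "tv inl (x(Unif i := y)) j = tv inl x j" for y j by (auto simp: tv_def)
  have uv_upd: "j \<noteq> i \<Longrightarrow> uv (x(Unif i := y)) j = uv x j" for y j by (auto simp: uv_def)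
  have uv_upd_i: "uv (x(Unif i := y)) i = clampu (y undefined)" for y by (auto simp: uv_def)
  have Pvj: "j \<noteq> i \<Longrightarrow> Pv n inl (x(Unif i := y)) j = Pv n inl x j" for y j
    unfolding Pv_wv wv_upd tv_upd using uv_upd by simp
  have Pvi: "Pv n inl (x(Unif i := y)) i = real_of_int (Nc n (wv n i x) t0 (clampu (y undefined))) / (real n + 1)" for y
    unfolding Pv_wv wv_upd tv_upd uv_upd_i t0_def ..
  have ind: "indicator F (x(Unif i := y)) = indicator G x * (indicator Sy y :: ennreal)" for y
  proof (cases "y \<in> Sy")
    case True
    then have pi: "Pv n inl (x(Unif i := y)) i = real_of_int r / (real n + 1)" unfolding Pvi Sy_def by simp
    then have eqP: "Pv n inl (x(Unif i := y)) = Phi n inl i r x"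
      by (auto simp: fun_eq_iff Phi_def Pvj)
    have "Phi n inl i r x i = real_of_int r / (real n + 1)" by (simp add: Phi_def)
    then have "(x(Unif i := y) \<in> F) = (x \<in> G)" unfolding F_def G_def using mem[of y] x eqP by auto
    then show ?thesis using True by (simp add: indicator_def)
  next
    case False
    then have "Pv n inl (x(Unif i := y)) i \<noteq> real_of_int r / (real n + 1)" unfolding Pvi Sy_def Nc_div_eq by simp
    then show ?thesis using False unfolding F_def by (auto simp: indicator_def)
  qed
  have "(\<integral>\<^sup>+ y. indicator F (x(Unif i := y)) \<partial>\<nu> (Unif i)) = (\<integral>\<^sup>+ y. indicator G x * indicator Sy y \<partial>\<nu> (Unif i))"
    by (simp add: ind)
  also have "\<dots> = indicator G x * emeasure (\<nu> (Unif i)) Sy"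
    unfolding Sy_def by (rule nn_integral_cmult_indicator[OF Sy_sets])
  also have "emeasure (\<nu> (Unif i)) Sy = ennreal (Qf n (wv n i x) r n)"
  proof -
    have "wv n i x n = t0" unfolding wv_def t0_def tv_def using iin by simp
    then show ?thesis unfolding Sy_def emeasure_Sy qf_eq[symmetric] by simp
  qed
  finally show ?thesis unfolding F_def G_def .
qed


lemma Fm_sets: "{x\<in>space (PiM (Sset n inl) \<nu>). Pv n inl x \<in> A \<and> Pv n inl x i = c} \<in> sets (PiM (Sset n inl) \<nu>)"
proof -
  have "{x\<in>space (PiM (Sset n inl) \<nu>). Pv n inl x \<in> A \<and> Pv n inl x i = c}
      = {x\<in>space (PiM (Sset n inl) \<nu>). Pv n inl x \<in> A \<inter> {f. f i = c}}" by auto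
  then show ?thesis by (simp only: F_sets)
qed

lemma outer:
  "emeasure (PiM (Sset n inl) \<nu>) {x\<in>space (PiM (Sset n inl) \<nu>). Pv n inl x \<in> A \<and> Pv n inl x i = real_of_int r / (real n + 1)}
   = (\<integral>\<^sup>+ x. indicator {x\<in>space (PiM (Sset n inl - {Unif i}) \<nu>). Phi n inl i r x \<in> A} x * ennreal (Qf n (wv n i x) r n)
       \<partial>PiM (Sset n inl - {Unif i}) \<nu>)"
proof -
  define S' where "S' = Sset n inl - {Unif i}"
  have eqS: "Sset n inl = insert (Unif i) S'" using S_split unfolding S'_def .
  interpret P: product_prob_space \<nu> S' by (rule PPS)
  define Fm where "Fm = {x\<in>space (PiM (Sset n inl) \<nu>). Pv n inl x \<in> A \<and> Pv n inl x i = real_of_int r / (real n + 1)}"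
  have Fm: "Fm \<in> sets (PiM (Sset n inl) \<nu>)" unfolding Fm_def by (rule Fm_sets)
  have fin: "finite S'" unfolding S'_def using S_fin by simp
  have nin: "Unif i \<notin> S'" unfolding S'_def by simp
  have "emeasure (PiM (Sset n inl) \<nu>) Fm = (\<integral>\<^sup>+ x. indicator Fm x \<partial>PiM (Sset n inl) \<nu>)"
    using Fm by simp
  also have "\<dots> = (\<integral>\<^sup>+ x. (\<integral>\<^sup>+ y. indicator Fm (x(Unif i := y)) \<partial>\<nu> (Unif i)) \<partial>PiM S' \<nu>)"
    unfolding eqS
    by (rule P.product_nn_integral_insert[OF fin nin]) (use Fm eqS in simp)
  also have "\<dots> = (\<integral>\<^sup>+ x. indicator {x\<in>space (PiM S' \<nu>). Phi n inl i r x \<in> A} x * ennreal (Qf n (wv n i x) r n) \<partial>PiM S' \<nu>)"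
    by (rule nn_integral_cong) (unfold S'_def Fm_def, rule inner, simp add: S'_def)
  finally show ?thesis unfolding Fm_def S'_def .
qed

lemma Phi_Phi2:
  "indicator {x\<in>space (PiM (Sset n inl - {Unif i}) \<nu>). Phi n inl i r x \<in> A} x * ennreal (Qf n (wv n i x) r n)
   = indicator {x\<in>space (PiM (Sset n inl - {Unif i}) \<nu>). Phi2 n inl i r x \<in> A} x * (ennreal (Qf n (wv n i x) r n))"
proof (cases "Qf n (wv n i x) r n = 0")
  case True then show ?thesis by simp
next
  case False
  define w where "w = wv n i x"
  have c: "int (card {k\<in>{..<n}. w k < w n}) < r"
     "r \<le> int (card {k\<in>{..<n}. w k < w n}) + int (card {k\<in>{..<n}. w k = w n}) + 1"
    using False unfolding qf_eq[symmetric] w_def[symmetric] by (auto split: if_splits)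
  have "Phi n inl i r x = Phi2 n inl i r x"
  proof
    fix j show "Phi n inl i r x j = Phi2 n inl i r x j"
      unfolding Phi_def Phi2_def Pv_wv w_def[symmetric] using Nc_eq_pvs[OF c] by simp
  qed
  then show ?thesis by (simp add: indicator_def)
qed

lemma tau_inv: "tau n i k (tau n i k m) = m"
  unfolding tau_def by auto

lemma tau_S: "k \<le> n \<Longrightarrow> m \<in> Sset n inl - {Unif i} \<Longrightarrow> tau n i k m \<in> Sset n inl - {Unif i}"
  unfolding tau_def Sset_def using iin by auto

lemma nu_tau: "\<nu> (tau n i k m) = \<nu> m"
  unfolding tau_def using sym\<nu> by auto

lemma Tk_distr:
  assumes "k \<le> n"
  shows "distr (PiM (Sset n inl - {Unif i}) \<nu>) (PiM (Sset n inl - {Unif i}) \<nu>) (\<lambda>x. \<lambda>m\<in>Sset n inl - {Unif i}. x (tau n i k m))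
     = PiM (Sset n inl - {Unif i}) \<nu>"
proof -
  define S' where "S' = Sset n inl - {Unif i}"
  interpret P: product_prob_space \<nu> S' by (rule PPS)
  have fin: "finite S'" unfolding S'_def using S_fin by simp
  have inj: "inj_on (tau n i k) S'" by (rule inj_onI) (metis tau_inv)
  have into: "tau n i k \<in> S' \<rightarrow> S'" unfolding S'_def using tau_S[OF assms] by auto
  have e: "(\<lambda>m. \<nu> (tau n i k m)) = \<nu>" by (rule ext) (rule nu_tau)
  show ?thesis using P.distr_reorder[OF inj into fin] unfolding e S'_def .
qed

lemma Tk_meas:
  assumes "k \<le> n"
  shows "(\<lambda>x. \<lambda>m\<in>Sset n inl - {Unif i}. x (tau n i k m)) \<in> measurable (PiM (Sset n inl - {Unif i}) \<nu>) (PiM (Sset n inl - {Unif i}) \<nu>)"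
proof (rule measurable_restrict)
  fix m assume m: "m \<in> Sset n inl - {Unif i}"
  have "(\<lambda>x. x (tau n i k m)) \<in> measurable (PiM (Sset n inl - {Unif i}) \<nu>) (\<nu> (tau n i k m))"
    by (rule measurable_component_singleton) (rule tau_S[OF assms m])
  then show "(\<lambda>x. x (tau n i k m)) \<in> measurable (PiM (Sset n inl - {Unif i}) \<nu>) (\<nu> m)"
    unfolding nu_tau .
qed

lemma Tk_wv:
  assumes "k \<le> n" "j \<le> n" "x \<in> space (PiM (Sset n inl - {Unif i}) \<nu>)"
  shows "wv n i (\<lambda>m\<in>Sset n inl - {Unif i}. x (tau n i k m)) j = (wv n i x \<circ> tr k n) j"
  using assms iin unfolding wv_def tau_def tr_def Sset_def by (auto simp: less_le)

lemma Tk_tv: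
  assumes "j \<noteq> i"
  shows "tv inl (\<lambda>m\<in>Sset n inl - {Unif i}. x (tau n i k m)) j = tv inl x j"
  using assms unfolding tv_def tau_def Sset_def by auto

lemma Tk_uv:
  assumes "j \<noteq> i"
  shows "uv (\<lambda>m\<in>Sset n inl - {Unif i}. x (tau n i k m)) j = uv x j"
  using assms unfolding uv_def tau_def Sset_def by auto

lemma Tk_Phi2:
  assumes "k \<le> n" "x \<in> space (PiM (Sset n inl - {Unif i}) \<nu>)"
  shows "Phi2 n inl i r (\<lambda>m\<in>Sset n inl - {Unif i}. x (tau n i k m)) = Phi2 n inl i r x"
proof
  fix j
  show "Phi2 n inl i r (\<lambda>m\<in>Sset n inl - {Unif i}. x (tau n i k m)) j = Phi2 n inl i r x j"
  proof (cases "j = i")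
    case True then show ?thesis unfolding Phi2_def by simp
  next
    case False
    have "pvs n (wv n i (\<lambda>m\<in>Sset n inl - {Unif i}. x (tau n i k m))) r (tv inl x j) (uv x j)
        = pvs n (wv n i x \<circ> tr k n) r (tv inl x j) (uv x j)"
      by (rule pvs_cong) (rule Tk_wv[OF assms(1) _ assms(2)])
    also have "\<dots> = pvs n (wv n i x) r (tv inl x j) (uv x j)" by (rule pvs_tr[OF assms(1)])
    finally show ?thesis unfolding Phi2_def using False Tk_tv[OF False] Tk_uv[OF False] by simp
  qed
qed

lemma Tk_Qf:
  assumes "k \<le> n" "x \<in> space (PiM (Sset n inl - {Unif i}) \<nu>)"
  shows "Qf n (wv n i (\<lambda>m\<in>Sset n inl - {Unif i}. x (tau n i k m))) r n = Qf n (wv n i x) r k"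
proof -
  have "Qf n (wv n i (\<lambda>m\<in>Sset n inl - {Unif i}. x (tau n i k m))) r n = Qf n (wv n i x \<circ> tr k n) r n"
    by (rule Qf_cong) (simp_all add: Tk_wv[OF assms(1) _ assms(2)])
  also have "\<dots> = Qf n (wv n i x) r k" by (rule Qf_tr[OF assms(1)])
  finally show ?thesis .
qed

lemma swap_int:
  assumes "k \<le> n" "1 \<le> r" "r \<le> int n + 1"
  shows "(\<integral>\<^sup>+ x. indicator {x\<in>space (PiM (Sset n inl - {Unif i}) \<nu>). Phi2 n inl i r x \<in> A} x * ennreal (Qf n (wv n i x) r n) \<partial>PiM (Sset n inl - {Unif i}) \<nu>)
   = (\<integral>\<^sup>+ x. indicator {x\<in>space (PiM (Sset n inl - {Unif i}) \<nu>). Phi2 n inl i r x \<in> A} x * ennreal (Qf n (wv n i x) r k) \<partial>PiM (Sset n inl - {Unif i}) \<nu>)"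
    (is "integral\<^sup>N ?P ?f = _")
proof -
  let ?T = "\<lambda>x. \<lambda>m\<in>Sset n inl - {Unif i}. x (tau n i k m)"
  let ?G = "{x\<in>space ?P. Phi2 n inl i r x \<in> A}"
  have G: "?G \<in> sets ?P" by (rule G_sets[OF assms(2,3)])
  have [measurable]: "(\<lambda>x. Qf n (wv n i x) r n) \<in> borel_measurable ?P" by (rule Qf_wv_meas)
  have fm: "?f \<in> borel_measurable ?P" using G by measurable
  have "integral\<^sup>N ?P ?f = integral\<^sup>N (distr ?P ?P ?T) ?f" unfolding Tk_distr[OF assms(1)] ..
  also have "\<dots> = (\<integral>\<^sup>+ x. ?f (?T x) \<partial>?P)"
    by (rule nn_integral_distr[OF Tk_meas[OF assms(1)]]) (use fm in simp)
  also have "\<dots> = (\<integral>\<^sup>+ x. indicator ?G x * ennreal (Qf n (wv n i x) r k) \<partial>?P)"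
  proof (rule nn_integral_cong)
    fix x assume x: "x \<in> space ?P"
    have Tx: "?T x \<in> space ?P" using measurable_space[OF Tk_meas[OF assms(1)] x] .
    have "indicator ?G (?T x) = (indicator ?G x :: ennreal)"
      using Tx x Tk_Phi2[OF assms(1) x] by (simp add: indicator_def)
    then show "?f (?T x) = indicator ?G x * ennreal (Qf n (wv n i x) r k)"
      using Tk_Qf[OF assms(1) x] by simp
  qed
  finally show ?thesis .
qed

lemma Qf_nonneg: "0 \<le> Qf n w r k" unfolding Qf_def by auto

lemma main_eq:
  assumes "1 \<le> r" "r \<le> int n + 1"
  shows "emeasure (PiM (Sset n inl) \<nu>) {x\<in>space (PiM (Sset n inl) \<nu>). Pv n inl x \<in> A \<and> Pv n inl x i = real_of_int r / (real n + 1)}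
     * of_nat (Suc n) = emeasure (PiM (Sset n inl - {Unif i}) \<nu>) {x\<in>space (PiM (Sset n inl - {Unif i}) \<nu>). Phi2 n inl i r x \<in> A}"
proof -
  let ?P = "PiM (Sset n inl - {Unif i}) \<nu>"
  let ?G = "{x\<in>space ?P. Phi2 n inl i r x \<in> A}"
  have G: "?G \<in> sets ?P" by (rule G_sets[OF assms])
  have [measurable]: "(\<lambda>x. Qf n (wv n i x) r k) \<in> borel_measurable ?P" for k by (rule Qf_wv_meas)
  have fm: "(\<lambda>x. indicator ?G x * ennreal (Qf n (wv n i x) r k)) \<in> borel_measurable ?P" for k
    using G by measurable
  define I where "I = (\<integral>\<^sup>+ x. indicator ?G x * ennreal (Qf n (wv n i x) r n) \<partial>?P)"
  have eqI: "emeasure (PiM (Sset n inl) \<nu>) {x\<in>space (PiM (Sset n inl) \<nu>). Pv n inl x \<in> A \<and> Pv n inl x i = real_of_int r / (real n + 1)} = I"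
    unfolding outer I_def by (simp only: Phi_Phi2)
  have "I * of_nat (Suc n) = (\<Sum>k\<le>n. I)" by (simp add: mult.commute)
  also have "\<dots> = (\<Sum>k\<le>n. (\<integral>\<^sup>+ x. indicator ?G x * ennreal (Qf n (wv n i x) r k) \<partial>?P))"
    unfolding I_def by (rule sum.cong[OF refl]) (rule swap_int[OF _ assms], simp)
  also have "\<dots> = (\<integral>\<^sup>+ x. (\<Sum>k\<le>n. indicator ?G x * ennreal (Qf n (wv n i x) r k)) \<partial>?P)"
    by (rule nn_integral_sum[symmetric]) (rule fm)
  also have "\<dots> = (\<integral>\<^sup>+ x. indicator ?G x \<partial>?P)"
  proof (rule nn_integral_cong)
    fix x
    have "(\<Sum>k\<le>n. indicator ?G x * ennreal (Qf n (wv n i x) r k)) = indicator ?G x * (\<Sum>k\<le>n. ennreal (Qf n (wv n i x) r k))"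
      by (rule sum_distrib_left[symmetric])
    also have "(\<Sum>k\<le>n. ennreal (Qf n (wv n i x) r k)) = ennreal (\<Sum>k\<le>n. Qf n (wv n i x) r k)"
      by (rule sum_ennreal) (rule Qf_nonneg)
    also have "(\<Sum>k\<le>n. Qf n (wv n i x) r k) = 1" by (rule Qf_sum[OF assms])
    finally show "(\<Sum>k\<le>n. indicator ?G x * ennreal (Qf n (wv n i x) r k)) = indicator ?G x" by simp
  qed
  also have "\<dots> = emeasure ?P ?G" using G by simp
  finally show ?thesis unfolding eqI .
qed

lemma zero_case:
  assumes "\<not> (1 \<le> r \<and> r \<le> int n + 1)"
  shows "emeasure (PiM (Sset n inl) \<nu>) {x\<in>space (PiM (Sset n inl) \<nu>). Pv n inl x \<in> A \<and> Pv n inl x i = real_of_int r / (real n + 1)} = 0"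
proof -
  have "Qf n w r n = 0" for w
  proof -
    have "clt n w (w n) + ceq n w (w n) \<le> n + 1" by (rule clt_ceq_le)
    then show ?thesis using assms unfolding Qf_def by auto
  qed
  then show ?thesis unfolding outer by simp
qed

lemma Phi2_mono:
  assumes "r \<le> r'" "increasing_set A" "Phi2 n inl i r x \<in> A"
  shows "Phi2 n inl i r' x \<in> A"
proof -
  have "Phi2 n inl i r x j \<le> Phi2 n inl i r' x j" for j
  proof (cases "j = i")
    case True then show ?thesis unfolding Phi2_def using assms(1) by (simp add: divide_right_mono)
  next
    case False then show ?thesis unfolding Phi2_def using pvs_mono[OF assms(1) uv_bounds] by simp
  qed
  then show ?thesis using assms(2,3) unfolding increasing_set_def by blast
qed

end

lemma ennreal_eq_real:
  assumes "ennreal a * of_nat m = ennreal b" "0 \<le> a" "0 \<le> b"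
  shows "a * real m = b"
proof -
  have "ennreal (a * real m) = ennreal a * of_nat m"
    using assms(2) by (simp add: ennreal_mult ennreal_of_nat_eq_real_of_nat)
  then have "ennreal (a * real m) = ennreal b" using assms(1) by simp
  then show ?thesis using assms(2,3) by simp
qed

theorem proposition4:
  fixes M :: "'w measure" and PX :: "(real ^ 'd) measure" and s :: "real ^ 'd \<Rightarrow> real"
    and n :: nat and Xcal :: "nat \<Rightarrow> 'w \<Rightarrow> real ^ 'd"
    and Xtest :: "'m::finite \<Rightarrow> 'w \<Rightarrow> real ^ 'd" and U :: "'m \<Rightarrow> 'w \<Rightarrow> real"
    and inl :: "'m set"
  assumes "prob_space M" and "prob_space PX" and "s \<in> borel_measurable borel"
    and "\<forall>i<n. Xcal i \<in> borel_measurable M"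
    and "\<forall>j. Xtest j \<in> borel_measurable M"
    and "\<forall>j. U j \<in> borel_measurable M"
    and "\<forall>i<n. distr M borel (Xcal i) = PX"
    and "\<forall>j\<in>inl. distr M borel (Xtest j) = PX"
    and "\<forall>j. distr M borel (U j) = uniform_measure lborel {0..1}"
    and "\<forall>j. \<forall>\<omega>\<in>space M. 0 \<le> U j \<omega> \<and> U j \<omega> \<le> 1"
    and "prob_space.indep_sets M (src_sigma M Xcal Xtest U inl)
           (Cal ` {..<n} \<union> Inl ` inl \<union> range Unif \<union> {Outl})"
  shows "PRDS_on M (\<lambda>j \<omega>. conf_pval s n (\<lambda>i. Xcal i \<omega>) (Xtest j \<omega>) (U j \<omega>)) inl"
proof -
  note PM = assms(1) and sm = assms(3) and Xc = assms(4) and Xt = assms(5) and Um = assms(6)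
  note dXc = assms(7) and dXt = assms(8) and dU = assms(9) and Ub = assms(10)
  have ind: "prob_space.indep_sets M (src_sigma M Xcal Xtest U inl) (Sset n inl)"
    using assms(11) unfolding Sset_def .
  interpret M: prob_space M by (rule PM)
  define Y where "Y = Yv s n Xcal Xtest U inl"
  define S where "S = Sset n inl"
  define \<nu> where "\<nu> k = distr M BM (Y k)" for k
  define \<xi> where "\<xi> \<omega> = (\<lambda>k\<in>S. Y k \<omega>)" for \<omega>
  define pv where "pv = (\<lambda>j \<omega>. conf_pval s n (\<lambda>i. Xcal i \<omega>) (Xtest j \<omega>) (U j \<omega>))"
  have Ym: "Y k \<in> measurable M BM" for k
    unfolding Y_def by (rule Yv_meas[OF PM sm Xc Xt Um ind])
  have joint: "distr M (PiM S (\<lambda>_. BM)) \<xi> = PiM S \<nu>"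
    unfolding \<xi>_def \<nu>_def S_def Y_def by (rule joint_law[OF PM sm Xc Xt Um ind])
  have prob\<nu>: "prob_space (\<nu> k)" for k unfolding \<nu>_def by (rule M.prob_space_distr[OF Ym])
  have sets\<nu>: "sets (\<nu> k) = sets BM" for k unfolding \<nu>_def by simp
  have sBM: "(\<lambda>x (z::'m). s x) \<in> measurable borel BM" using sm by (rule const_fun_meas)
  have \<nu>PX: "\<nu> (Cal k) = distr PX BM (\<lambda>x z. s x)" if "k < n" for k
  proof -
    have "\<nu> (Cal k) = distr M BM ((\<lambda>x z. s x) \<circ> Xcal k)"
      unfolding \<nu>_def Y_def Yv_def using that by (simp add: comp_def)
    also have "\<dots> = distr (distr M borel (Xcal k)) BM (\<lambda>x z. s x)"
      using Xc that by (intro distr_distr[symmetric] sBM) auto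
    finally show ?thesis using dXc that by simp
  qed
  have \<nu>PX': "\<nu> (Inl j) = distr PX BM (\<lambda>x z. s x)" if "j \<in> inl" for j
  proof -
    have "\<nu> (Inl j) = distr M BM ((\<lambda>x z. s x) \<circ> Xtest j)"
      unfolding \<nu>_def Y_def Yv_def by (simp add: comp_def)
    also have "\<dots> = distr (distr M borel (Xtest j)) BM (\<lambda>x z. s x)"
      using Xt by (intro distr_distr[symmetric] sBM) auto
    finally show ?thesis using dXt that by simp
  qed
  have \<nu>U: "\<nu> (Unif j) = distr (uniform_measure lborel {0..1}) BM (\<lambda>t z. t)" for j
  proof -
    have idm: "(\<lambda>t::real. \<lambda>z::'m. t) \<in> measurable borel BM" by (rule const_fun_meas) simp
    have "\<nu> (Unif j) = distr M BM ((\<lambda>t z. t) \<circ> U j)"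
      unfolding \<nu>_def Y_def Yv_def by (simp add: comp_def)
    also have "\<dots> = distr (distr M borel (U j)) BM (\<lambda>t z. t)"
      using Um by (intro distr_distr[symmetric] idm) auto
    finally show ?thesis using dU by simp
  qed
  have \<xi>m: "\<xi> \<in> measurable M (PiM S (\<lambda>_. BM))"
    unfolding \<xi>_def by (rule measurable_restrict) (rule Ym)
  have setsS: "sets (PiM S (\<lambda>_. BM)) = sets (PiM S \<nu>)"
    by (rule sets_PiM_cong) (auto simp: sets\<nu>)
  have spaceS: "space (PiM S (\<lambda>_. BM)) = space (PiM S \<nu>)"
    by (rule sets_eq_imp_space_eq[OF setsS])
  have Cal_in: "Cal k \<in> S" if "k < n" for k unfolding S_def Sset_def using that by auto
  have pvPv: "(\<lambda>j. pv j \<omega>) = Pv n inl (\<xi> \<omega>)" if "\<omega> \<in> space M" for \<omega>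
  proof
    fix j
    have cv: "cv (\<xi> \<omega>) k = s (Xcal k \<omega>)" if "k < n" for k
      using that Cal_in[OF that] unfolding cv_def \<xi>_def Y_def Yv_def by simp
    have "Outl \<in> S" "j \<in> inl \<Longrightarrow> Inl j \<in> S" unfolding S_def Sset_def by auto
    then have tv: "tv inl (\<xi> \<omega>) j = s (Xtest j \<omega>)"
      unfolding tv_def \<xi>_def Y_def Yv_def by auto
    have ub: "0 \<le> U j \<omega>" "U j \<omega> \<le> 1" using Ub that by auto
    have "Unif j \<in> S" unfolding S_def Sset_def by auto
    then have uv: "uv (\<xi> \<omega>) j = U j \<omega>"
      unfolding uv_def \<xi>_def Y_def Yv_def using ub by (simp add: clampu_id)
    show "pv j \<omega> = Pv n inl (\<xi> \<omega>) j"
    proof -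
      have "Nc n (\<lambda>k. s (Xcal k \<omega>)) (s (Xtest j \<omega>)) (U j \<omega>) = Nc n (cv (\<xi> \<omega>)) (s (Xtest j \<omega>)) (U j \<omega>)"
        by (rule Nc_cong) (simp add: cv)
      then show ?thesis unfolding pv_def Pv_def conf_pval_Nc tv uv by simp
    qed
  qed
  have key: "measure M {\<omega>\<in>space M. (\<lambda>j. pv j \<omega>) \<in> B \<and> pv i \<omega> = y}
      = measure (PiM S \<nu>) {x\<in>space (PiM S \<nu>). Pv n inl x \<in> B \<and> Pv n inl x i = y}"
    if iin: "i \<in> inl" for B y i
  proof -
    define F where "F = {x\<in>space (PiM S \<nu>). Pv n inl x \<in> B \<and> Pv n inl x i = y}"
    have sym: "\<nu> (Cal k) = \<nu> (Inl i)" if "k < n" for k using \<nu>PX[OF that] \<nu>PX'[OF iin] by simp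
    have F: "F \<in> sets (PiM S \<nu>)"
      unfolding F_def S_def by (rule Fm_sets[OF prob\<nu> sets\<nu> iin sym \<nu>U])
    have "{\<omega>\<in>space M. (\<lambda>j. pv j \<omega>) \<in> B \<and> pv i \<omega> = y} = \<xi> -` F \<inter> space M"
    proof (intro equalityI subsetI)
      fix \<omega> assume a: "\<omega> \<in> {\<omega>\<in>space M. (\<lambda>j. pv j \<omega>) \<in> B \<and> pv i \<omega> = y}"
      then have sp: "\<omega> \<in> space M" by simp
      have e: "(\<lambda>j. pv j \<omega>) = Pv n inl (\<xi> \<omega>)" by (rule pvPv[OF sp])
      have e2: "pv i \<omega> = Pv n inl (\<xi> \<omega>) i" using fun_cong[OF e, of i] by simp
      have "\<xi> \<omega> \<in> space (PiM S \<nu>)" using measurable_space[OF \<xi>m sp] spaceS by simp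
      moreover have "(\<lambda>j. pv j \<omega>) \<in> B" "pv i \<omega> = y" using a by auto
      then have "Pv n inl (\<xi> \<omega>) \<in> B" "Pv n inl (\<xi> \<omega>) i = y" by (simp_all only: e e2)
      ultimately show "\<omega> \<in> \<xi> -` F \<inter> space M" using sp unfolding F_def by simp
    next
      fix \<omega> assume a: "\<omega> \<in> \<xi> -` F \<inter> space M"
      then have sp: "\<omega> \<in> space M" by simp
      have e: "(\<lambda>j. pv j \<omega>) = Pv n inl (\<xi> \<omega>)" by (rule pvPv[OF sp])
      have e2: "pv i \<omega> = Pv n inl (\<xi> \<omega>) i" using fun_cong[OF e, of i] by simp
      have "Pv n inl (\<xi> \<omega>) \<in> B" "Pv n inl (\<xi> \<omega>) i = y" using a unfolding F_def by auto
      then have "(\<lambda>j. pv j \<omega>) \<in> B" "pv i \<omega> = y" by (simp_all only: e e2)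
      then show "\<omega> \<in> {\<omega>\<in>space M. (\<lambda>j. pv j \<omega>) \<in> B \<and> pv i \<omega> = y}" using sp by simp
    qed
    then have "measure M {\<omega>\<in>space M. (\<lambda>j. pv j \<omega>) \<in> B \<and> pv i \<omega> = y} = measure (distr M (PiM S (\<lambda>_. BM)) \<xi>) F"
      using measure_distr[OF \<xi>m, of F] F setsS by simp
    then show ?thesis unfolding joint F_def .
  qed
  have "PRDS_on M pv inl"
    unfolding PRDS_on_def
  proof (intro ballI allI impI)
    fix i :: 'm and A :: "('m \<Rightarrow> real) set" and y y' :: real
    assume iin: "i \<in> inl" and incA: "increasing_set A"
      and yy: "y \<le> y' \<and> 0 < measure M {\<omega>\<in>space M. pv i \<omega> = y} \<and> 0 < measure M {\<omega>\<in>space M. pv i \<omega> = y'}"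
    have sym: "\<nu> (Cal k) = \<nu> (Inl i)" if "k < n" for k using \<nu>PX[OF that] \<nu>PX'[OF iin] by simp
    define P1 where "P1 = PiM (Sset n inl) \<nu>"
    define P2 where "P2 = PiM (Sset n inl - {Unif i}) \<nu>"
    have pP1: "prob_space P1" unfolding P1_def by (rule prob_space_PiM) (rule prob\<nu>)
    have pP2: "prob_space P2" unfolding P2_def by (rule prob_space_PiM) (rule prob\<nu>)
    define FF where "FF B z = {x\<in>space P1. Pv n inl x \<in> B \<and> Pv n inl x i = z}" for B z
    define GG where "GG B r = {x\<in>space P2. Phi2 n inl i r x \<in> B}" for B r
    have numer: "measure M {\<omega>\<in>space M. (\<lambda>j. pv j \<omega>) \<in> B \<and> pv i \<omega> = z} = measure P1 (FF B z)" for B z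
      unfolding FF_def P1_def S_def[symmetric] by (rule key[OF iin])
    have denom: "measure M {\<omega>\<in>space M. pv i \<omega> = z} = measure P1 (FF UNIV z)" for z
      using numer[of UNIV z] by simp
    interpret P1: prob_space P1 by (rule pP1)
    interpret P2: prob_space P2 by (rule pP2)
    have emeq: "emeasure P1 (FF B z) = ennreal (measure P1 (FF B z))" for B z
      by (rule P1.emeasure_eq_measure)
    have emeq2: "emeasure P2 (GG B r) = ennreal (measure P2 (GG B r))" for B r
      by (rule P2.emeasure_eq_measure)
    have cond: "measure P1 (FF B (real_of_int r / (real n + 1))) * real (Suc n) = measure P2 (GG B r)"
      if "1 \<le> r" "r \<le> int n + 1" for B r
      using main_eq[OF prob\<nu> sets\<nu> iin sym \<nu>U that, of B]
      unfolding FF_def[symmetric] GG_def[symmetric] P1_def[symmetric] P2_def[symmetric] emeq emeq2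
      by (rule ennreal_eq_real) auto
    have G1: "measure P2 (GG UNIV r) = 1" for r
    proof -
      have "GG UNIV r = space P2" unfolding GG_def by auto
      then show ?thesis by (simp add: P2.prob_space)
    qed
    have pos_form: "\<exists>r::int. z = real_of_int r / (real n + 1) \<and> 1 \<le> r \<and> r \<le> int n + 1"
      if pos: "0 < measure P1 (FF UNIV z)" for z
    proof (rule ccontr)
      assume nex: "\<not> ?thesis"
      show False
      proof (cases "\<exists>r::int. z = real_of_int r / (real n + 1)")
        case True
        then obtain r where r: "z = real_of_int r / (real n + 1)" by blast
        then have nr: "\<not> (1 \<le> r \<and> r \<le> int n + 1)" using nex by blast
        have "emeasure P1 (FF UNIV z) = 0"
          unfolding FF_def P1_def r by (rule zero_case[OF prob\<nu> sets\<nu> iin sym \<nu>U nr])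
        then have "measure P1 (FF UNIV z) = 0" unfolding emeq by simp
        then show False using pos by simp
      next
        case False
        have "FF UNIV z = {}"
        proof -
          have "Pv n inl x i \<noteq> z" for x using False unfolding Pv_def by blast
          then show ?thesis unfolding FF_def by auto
        qed
        then show False using pos by simp
      qed
    qed
    obtain r where r: "y = real_of_int r / (real n + 1)" "1 \<le> r" "r \<le> int n + 1"
      using pos_form yy denom by metis
    obtain r' where r': "y' = real_of_int r' / (real n + 1)" "1 \<le> r'" "r' \<le> int n + 1"
      using pos_form yy denom by metis
    have rr: "r \<le> r'"
    proof -
      have "real_of_int r / (real n + 1) \<le> real_of_int r' / (real n + 1)" using yy r r' by simp
      then have "real_of_int r \<le> real_of_int r'" by (simp add: divide_le_cancel)
      then show ?thesis by simp
    qed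
    have cp: "cond_prob_eq M pv A i (real_of_int q / (real n + 1)) = measure P2 (GG A q)"
      if "1 \<le> q" "q \<le> int n + 1" for q
    proof -
      have sn: "real (Suc n) \<noteq> 0" by simp
      have a: "measure P1 (FF A (real_of_int q / (real n + 1))) = measure P2 (GG A q) / real (Suc n)"
        using cond[OF that, of A] sn by (simp add: field_simps)
      have b: "measure P1 (FF UNIV (real_of_int q / (real n + 1))) = 1 / real (Suc n)"
        using cond[OF that, of UNIV] G1[of q] sn by (simp add: field_simps)
      show ?thesis unfolding cond_prob_eq_def numer denom a b using sn by simp
    qed
    have sub: "GG A r \<subseteq> GG A r'"
      unfolding GG_def using Phi2_mono[OF prob\<nu> sets\<nu> iin sym \<nu>U rr incA] by auto
    have Gs: "GG A r' \<in> sets P2"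
      unfolding GG_def P2_def by (rule G_sets[OF prob\<nu> sets\<nu> iin sym \<nu>U r'(2,3)])
    have "measure P2 (GG A r) \<le> measure P2 (GG A r')"
      using P2.finite_measure_mono[OF sub Gs] .
    then show "cond_prob_eq M pv A i y \<le> cond_prob_eq M pv A i y'"
      unfolding r(1) r'(1) cp[OF r(2,3)] cp[OF r'(2,3)] .
  qed
  then show ?thesis unfolding pv_def .
qed

end
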